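(* Let $n\ge1$, let $H\subseteq Q_n$ be any set of more than $2^{n-1}$ vertices, and let $C>0$. Then there exists $\beta\in H$ (depending on $C$) such that \[ \sqrt{n}\ \le\ C\cdot\#\{\gamma\in H:\gamma\to\beta\}+\frac{1}{C}\cdot\#\{\gamma\in H:\beta\to\gamma\}. \]
   Context: $Q_n=\{0,1\}^n$ is the boolean cube, viewed as a graph in which two vertices are adjacent iff they differ in exactly one coordinate. For $\gamma,\beta\in Q_n$ write $\gamma\to\beta$ if $\gamma$ and $\beta$ differ in exactly one coordinate $k$ and $\gamma_k=0$, $\beta_k=1$ (i.e. $\beta$ is obtained from $\gamma$ by changing a single $0$ to $1$). *)

theory Defs
  imports Complex_Main
begin

text \<open>The boolean cube Q_n: vertices are bool lists of length n (False = 0, True = 1).\<close>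
definition cube :: "nat \<Rightarrow> bool list set" where
  "cube n = {xs. length xs = n}"

definition up_edge :: "bool list \<Rightarrow> bool list \<Rightarrow> bool" where
  "up_edge g b \<longleftrightarrow> length g = length b \<and>
     (\<exists>k < length b. \<not> g ! k \<and> b ! k \<and> (\<forall>j < length b. j \<noteq> k \<longrightarrow> g ! j = b ! j))"

end

theory Submission imports Defs begin

definition flip :: "nat \<Rightarrow> bool list \<Rightarrow> bool list" where
  "flip k x = x[k := \<not> x!k]"
definition sg :: "bool list \<Rightarrow> nat \<Rightarrow> real" where
  "sg x k = (\<Prod>i<k. if x!i then -1 else 1)"
definition Aop :: "(bool list \<Rightarrow> real) \<Rightarrow> bool list \<Rightarrow> real" where
  "Aop u x = (\<Sum>k<length x. sg x k * u (flip k x))"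

lemma length_flip[simp]: "length (flip k x) = length x"
  by (simp add: flip_def)

lemma nth_flip: "i < length x \<Longrightarrow> flip k x ! i = (if i = k then \<not> x!i else x!i)"
  by (simp add: flip_def nth_list_update)

lemma flip_flip[simp]: "flip k (flip k x) = x"
  by (cases "k < length x") (auto simp: flip_def list_update_beyond)

lemma flip_comm: "flip j (flip k x) = flip k (flip j x)"
  by (rule nth_equalityI) (auto simp: nth_flip)

lemma sg_flip_le: "j \<le> k \<Longrightarrow> sg (flip k x) j = sg x j"
proof -
  assume "j \<le> k"
  show ?thesis unfolding sg_def
    by (rule prod.cong) (use \<open>j \<le> k\<close> in \<open>auto simp: flip_def nth_list_update\<close>)
qed

lemma sg_flip_gt: assumes "k < j" "k < length x" shows "sg (flip k x) j = - sg x j"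
proof -
  have kin: "k \<in> {..<j}" using assms by auto
  have "sg (flip k x) j = (if flip k x ! k then -1 else 1) * (\<Prod>i\<in>{..<j}-{k}. if flip k x!i then -1 else 1)"
    unfolding sg_def by (rule prod.remove[OF _ kin]) simp
  also have "(\<Prod>i\<in>{..<j}-{k}. if flip k x!i then -1 else 1) = (\<Prod>i\<in>{..<j}-{k}. if x!i then -1 else (1::real))"
    by (rule prod.cong) (auto simp: flip_def nth_list_update)
  also have "sg x j = (if x ! k then -1 else 1) * (\<Prod>i\<in>{..<j}-{k}. if x!i then -1 else (1::real))"
    unfolding sg_def by (rule prod.remove[OF _ kin]) simp
  ultimately show ?thesis using assms by (simp add: nth_flip)
qed

lemma sg_sq: "sg x k * sg x k = 1"
  unfolding sg_def prod.distrib[symmetric] by (rule prod.neutral) auto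

lemma sg_abs: "\<bar>sg x k\<bar> = 1"
  unfolding sg_def abs_prod by (rule prod.neutral) auto

lemma antisym_sg: assumes "j \<noteq> k" "j < length x" "k < length x"
  shows "sg x k * sg (flip k x) j = - (sg x j * sg (flip j x) k)"
proof (cases "k < j")
  case True
  then show ?thesis using assms by (simp add: sg_flip_gt sg_flip_le)
next
  case False
  then have "j < k" using assms by auto
  then show ?thesis using assms by (simp add: sg_flip_gt sg_flip_le)
qed

lemma antisym_sum0:
  fixes G :: "nat \<Rightarrow> nat \<Rightarrow> real"
  assumes "\<And>k j. k \<in> A \<Longrightarrow> j \<in> A \<Longrightarrow> G k j = - G j k"
  shows "(\<Sum>k\<in>A. \<Sum>j\<in>A. G k j) = 0"
proof -
  have "(\<Sum>k\<in>A. \<Sum>j\<in>A. G k j) = (\<Sum>j\<in>A. \<Sum>k\<in>A. G k j)" by (rule sum.swap)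
  also have "\<dots> = (\<Sum>j\<in>A. \<Sum>k\<in>A. - G j k)"
    by (rule sum.cong, simp, rule sum.cong, simp, rule assms) auto
  also have "\<dots> = - (\<Sum>j\<in>A. \<Sum>k\<in>A. G j k)" by (simp add: sum_negf)
  finally show ?thesis by simp
qed

lemma A_sq: "Aop (Aop u) x = real (length x) * u x"
proof -
  let ?n = "length x"
  define G where "G k j = (if j = k then 0 else sg x k * sg (flip k x) j * u (flip j (flip k x)))" for k j
  have "Aop (Aop u) x = (\<Sum>k<?n. \<Sum>j<?n. sg x k * sg (flip k x) j * u (flip j (flip k x)))"
    unfolding Aop_def by (simp add: sum_distrib_left mult.assoc)
  also have "\<dots> = (\<Sum>k<?n. \<Sum>j<?n. (if j = k then u x else 0) + G k j)"
    by (rule sum.cong, simp, rule sum.cong) (auto simp: G_def sg_flip_le sg_sq)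
  also have "\<dots> = (\<Sum>k<?n. u x) + (\<Sum>k<?n. \<Sum>j<?n. G k j)"
    by (simp add: sum.distrib)
  also have "(\<Sum>k<?n. \<Sum>j<?n. G k j) = 0"
  proof (rule antisym_sum0)
    fix k j assume "k \<in> {..<?n}" "j \<in> {..<?n}"
    then show "G k j = - G j k"
      using antisym_sg[of j k x] by (auto simp: G_def flip_comm)
  qed
  finally show ?thesis by simp
qed


definition lin :: "(('a \<Rightarrow> real) \<Rightarrow> real) \<Rightarrow> bool" where
  "lin \<phi> \<longleftrightarrow> (\<forall>u v. \<phi> (\<lambda>x. u x + v x) = \<phi> u + \<phi> v) \<and> (\<forall>c u. \<phi> (\<lambda>x. c * u x) = c * \<phi> u)"

lemma lin_add: "lin \<phi> \<Longrightarrow> \<phi> (\<lambda>x. u x + v x) = \<phi> u + \<phi> v" by (simp add: lin_def)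
lemma lin_mult: "lin \<phi> \<Longrightarrow> \<phi> (\<lambda>x. c * u x) = c * \<phi> u" by (simp add: lin_def)
lemma lin_zero: "lin \<phi> \<Longrightarrow> \<phi> (\<lambda>x. 0) = 0"
  using lin_mult[of \<phi> 0 "\<lambda>x. 0"] by simp

lemma lin_expand:
  assumes "finite V" "lin \<phi>"
  shows "(\<forall>x. x \<notin> V \<longrightarrow> u x = 0) \<Longrightarrow> \<phi> u = (\<Sum>v\<in>V. u v * \<phi> (\<lambda>x. if x = v then 1 else 0))"
  using assms(1)
proof (induction V arbitrary: u rule: finite_induct)
  case empty
  then have "u = (\<lambda>x. 0)" by auto
  then show ?case using lin_zero[OF assms(2)] by simp
next
  case (insert a F)
  define u1 where "u1 x = (if x = a then 0 else u x)" for x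
  have u: "u = (\<lambda>x. u1 x + u a * (if x = a then 1 else 0))"
    by (auto simp: u1_def)
  have "\<phi> u = \<phi> u1 + u a * \<phi> (\<lambda>x. if x = a then 1 else 0)"
    by (subst u) (simp add: lin_add[OF assms(2)] lin_mult[OF assms(2)])
  moreover have "\<phi> u1 = (\<Sum>v\<in>F. u1 v * \<phi> (\<lambda>x. if x = v then 1 else 0))"
    using insert by (intro insert.IH) (auto simp: u1_def)
  moreover have "(\<Sum>v\<in>F. u1 v * \<phi> (\<lambda>x. if x = v then 1 else 0)) = (\<Sum>v\<in>F. u v * \<phi> (\<lambda>x. if x = v then 1 else 0))"
    using insert by (intro sum.cong) (auto simp: u1_def)
  ultimately show ?case using insert by simp
qed

lemma homog:
  fixes fs :: "(('a \<Rightarrow> real) \<Rightarrow> real) list"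
  assumes "finite V" "length fs < card V" "\<forall>\<phi>\<in>set fs. lin \<phi>"
  shows "\<exists>u. (\<forall>x. x \<notin> V \<longrightarrow> u x = 0) \<and> (\<exists>v\<in>V. u v \<noteq> 0) \<and> (\<forall>\<phi>\<in>set fs. \<phi> u = 0)"
  using assms
proof (induction "length fs" arbitrary: fs V)
  case 0
  then obtain v where "v \<in> V" by (metis card.empty ex_in_conv less_nat_zero_code)
  then show ?case using 0 by (intro exI[of _ "\<lambda>x. if x = v then 1 else 0"]) auto
next
  case (Suc m)
  then obtain f gs where fs: "fs = f # gs" by (cases fs) auto
  have linf: "lin f" and lings: "\<forall>\<phi>\<in>set gs. lin \<phi>" using Suc.prems fs by auto
  have lg: "length gs = m" using Suc.hyps fs by simp
  show ?case
  proof (cases "\<exists>v0\<in>V. f (\<lambda>x. if x = v0 then 1 else 0) \<noteq> 0")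
    case True
    then obtain v0 where v0: "v0 \<in> V" "f (\<lambda>x. if x = v0 then 1 else 0) \<noteq> 0" by blast
    define d where "d = (\<lambda>x. if x = v0 then 1 else (0::real))"
    define a where "a = f d"
    have a0: "a \<noteq> 0" using v0 by (simp add: a_def d_def)
    define hs where "hs = map (\<lambda>g u. g u - (g d / a) * f u) gs"
    have linhs: "\<forall>\<phi>\<in>set hs. lin \<phi>"
      using lings linf unfolding hs_def lin_def by (auto simp: algebra_simps add_divide_distrib)
    have "\<exists>u. (\<forall>x. x \<notin> V - {v0} \<longrightarrow> u x = 0) \<and> (\<exists>v\<in>V - {v0}. u v \<noteq> 0) \<and> (\<forall>\<phi>\<in>set hs. \<phi> u = 0)"
      using Suc.prems v0 lg linhs fs by (intro Suc.hyps(1)) (auto simp: hs_def)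
    then obtain u' where u': "\<forall>x. x \<notin> V - {v0} \<longrightarrow> u' x = 0" "\<exists>v\<in>V - {v0}. u' v \<noteq> 0"
      "\<forall>\<phi>\<in>set hs. \<phi> u' = 0" by blast
    define t where "t = - f u' / a"
    define u where "u x = u' x + t * d x" for x
    have "f u = f u' + t * f d" unfolding u_def
      by (simp only: lin_add[OF linf] lin_mult[OF linf])
    then have fu: "f u = 0" using a0 by (simp add: a_def[symmetric] t_def)
    have gu: "g u = 0" if "g \<in> set gs" for g
    proof -
      have lg: "lin g" using that lings by auto
      have "g u' - (g d / a) * f u' = 0" using u'(3) that unfolding hs_def by auto
      moreover have "g u = g u' + t * g d" unfolding u_def
        by (simp only: lin_add[OF lg] lin_mult[OF lg])
      ultimately show ?thesis using a0 by (simp add: t_def field_simps)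
    qed
    show ?thesis
    proof (intro exI[of _ u] conjI)
      show "\<forall>x. x \<notin> V \<longrightarrow> u x = 0" using u'(1) v0 by (auto simp: u_def d_def)
      show "\<exists>v\<in>V. u v \<noteq> 0" using u'(2) by (auto simp: u_def d_def)
      show "\<forall>\<phi>\<in>set fs. \<phi> u = 0" using fu gu fs by auto
    qed
  next
    case False
    have "\<exists>u. (\<forall>x. x \<notin> V \<longrightarrow> u x = 0) \<and> (\<exists>v\<in>V. u v \<noteq> 0) \<and> (\<forall>\<phi>\<in>set gs. \<phi> u = 0)"
      using Suc.prems lg lings fs by (intro Suc.hyps(1)) auto
    then obtain u where u: "\<forall>x. x \<notin> V \<longrightarrow> u x = 0" "\<exists>v\<in>V. u v \<noteq> 0" "\<forall>\<phi>\<in>set gs. \<phi> u = 0" by blast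
    have "f u = 0" using lin_expand[OF Suc.prems(1) linf u(1)] False by simp
    then show ?thesis using u fs by auto
  qed
qed


lemma card_cube: "card (cube n) = 2 ^ n"
  using card_lists_length_eq[of "UNIV::bool set" n] by (simp add: cube_def)

lemma finite_cube: "finite (cube n)"
  using finite_lists_length_eq[of "UNIV::bool set" n] by (simp add: cube_def)

lemma lin_Aop: "lin (\<lambda>u. Aop u x + c * u x)"
  unfolding lin_def Aop_def by (simp add: sum.distrib sum_distrib_left algebra_simps)

definition wt :: "bool list \<Rightarrow> real" where
  "wt x = (\<Sum>i<length x. if x!i then 1 else 0)"

lemma wt_flip: assumes "k < length x"
  shows "wt (flip k x) = wt x + (if x!k then -1 else 1)"
proof -
  have kin: "k \<in> {..<length x}" using assms by auto
  have "wt (flip k x) = (if flip k x ! k then 1 else 0) + (\<Sum>i\<in>{..<length x}-{k}. if flip k x!i then 1 else 0)"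
    unfolding wt_def by (simp add: sum.remove[OF _ kin])
  also have "(\<Sum>i\<in>{..<length x}-{k}. if flip k x!i then 1 else 0) = (\<Sum>i\<in>{..<length x}-{k}. if x!i then 1 else (0::real))"
    by (rule sum.cong) (auto simp: flip_def nth_list_update)
  also have "wt x = (if x ! k then 1 else 0) + (\<Sum>i\<in>{..<length x}-{k}. if x!i then 1 else (0::real))"
    unfolding wt_def by (simp add: sum.remove[OF _ kin])
  ultimately show ?thesis using assms by (simp add: nth_flip)
qed

lemma card_down:
  assumes "length b = n"
  shows "card {k. k < n \<and> b!k \<and> flip k b \<in> H} = card {g\<in>H. up_edge g b}"
proof (rule bij_betw_same_card[of "\<lambda>k. flip k b"])
  show "bij_betw (\<lambda>k. flip k b) {k. k < n \<and> b!k \<and> flip k b \<in> H} {g\<in>H. up_edge g b}"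
  proof (rule bij_betw_imageI)
    show "inj_on (\<lambda>k. flip k b) {k. k < n \<and> b!k \<and> flip k b \<in> H}"
    proof (rule inj_onI)
      fix k j assume k: "k \<in> {k. k < n \<and> b!k \<and> flip k b \<in> H}" and j: "j \<in> {k. k < n \<and> b!k \<and> flip k b \<in> H}"
        and e: "flip k b = flip j b"
      have "flip k b ! k = flip j b ! k" using e by simp
      then show "k = j" using k j assms by (auto simp: nth_flip split: if_splits)
    qed
    show "(\<lambda>k. flip k b) ` {k. k < n \<and> b!k \<and> flip k b \<in> H} = {g\<in>H. up_edge g b}"
    proof (intro equalityI subsetI)
      fix g assume "g \<in> (\<lambda>k. flip k b) ` {k. k < n \<and> b!k \<and> flip k b \<in> H}"
      then obtain k where k: "k < n" "b!k" "flip k b \<in> H" "g = flip k b" by auto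
      then show "g \<in> {g\<in>H. up_edge g b}" using assms
        unfolding up_edge_def by (auto simp: nth_flip intro!: exI[of _ k])
    next
      fix g assume "g \<in> {g\<in>H. up_edge g b}"
      then obtain k where g: "g \<in> H" "length g = length b" "k < length b" "\<not> g!k" "b!k"
        "\<forall>j<length b. j \<noteq> k \<longrightarrow> g!j = b!j" unfolding up_edge_def by auto
      have "g = flip k b" by (rule nth_equalityI) (use g in \<open>auto simp: nth_flip\<close>)
      then show "g \<in> (\<lambda>k. flip k b) ` {k. k < n \<and> b!k \<and> flip k b \<in> H}" using g assms by auto
    qed
  qed
qed

lemma card_up:
  assumes "length b = n"
  shows "card {k. k < n \<and> \<not> b!k \<and> flip k b \<in> H} = card {g\<in>H. up_edge b g}"
proof (rule bij_betw_same_card[of "\<lambda>k. flip k b"])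
  show "bij_betw (\<lambda>k. flip k b) {k. k < n \<and> \<not> b!k \<and> flip k b \<in> H} {g\<in>H. up_edge b g}"
  proof (rule bij_betw_imageI)
    show "inj_on (\<lambda>k. flip k b) {k. k < n \<and> \<not> b!k \<and> flip k b \<in> H}"
    proof (rule inj_onI)
      fix k j assume k: "k \<in> {k. k < n \<and> \<not> b!k \<and> flip k b \<in> H}" and j: "j \<in> {k. k < n \<and> \<not> b!k \<and> flip k b \<in> H}"
        and e: "flip k b = flip j b"
      have "flip k b ! k = flip j b ! k" using e by simp
      then show "k = j" using k j assms by (auto simp: nth_flip split: if_splits)
    qed
    show "(\<lambda>k. flip k b) ` {k. k < n \<and> \<not> b!k \<and> flip k b \<in> H} = {g\<in>H. up_edge b g}"
    proof (intro equalityI subsetI)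
      fix g assume "g \<in> (\<lambda>k. flip k b) ` {k. k < n \<and> \<not> b!k \<and> flip k b \<in> H}"
      then obtain k where k: "k < n" "\<not> b!k" "flip k b \<in> H" "g = flip k b" by auto
      then show "g \<in> {g\<in>H. up_edge b g}" using assms
        unfolding up_edge_def by (auto simp: nth_flip intro!: exI[of _ k])
    next
      fix g assume "g \<in> {g\<in>H. up_edge b g}"
      then obtain k where g: "g \<in> H" "length b = length g" "k < length g" "\<not> b!k" "g!k"
        "\<forall>j<length g. j \<noteq> k \<longrightarrow> b!j = g!j" unfolding up_edge_def by auto
      have "g = flip k b" by (rule nth_equalityI) (use g in \<open>auto simp: nth_flip\<close>)
      then show "g \<in> (\<lambda>k. flip k b) ` {k. k < n \<and> \<not> b!k \<and> flip k b \<in> H}" using g assms by auto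
    qed
  qed
qed


theorem mainTheorem4:
  fixes n :: nat and H :: "bool list set" and C :: real
  assumes "n \<ge> 1"
    and "H \<subseteq> cube n"
    and "card H > 2 ^ (n - 1)"
    and "C > 0"
  shows "\<exists>\<beta>\<in>H. sqrt (real n) \<le>
           C * real (card {\<gamma>\<in>H. up_edge \<gamma> \<beta>}) + (1 / C) * real (card {\<gamma>\<in>H. up_edge \<beta> \<gamma>})"
proof -
  have finH: "finite H" using assms(2) finite_cube finite_subset by blast
  define L where "L = {x \<in> cube n. \<not> x!0}"
  have L_eq: "L = (Cons False) ` cube (n-1)"
  proof (intro equalityI subsetI)
    fix x assume xL: "x \<in> L"
    then obtain a t where x: "x = a # t" using assms(1) by (cases x) (auto simp: L_def cube_def)
    then have "a = False" "t \<in> cube (n-1)" using xL by (auto simp: L_def cube_def)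
    then show "x \<in> (Cons False) ` cube (n-1)" using x by blast
  next
    fix x assume "x \<in> (Cons False) ` cube (n-1)"
    then show "x \<in> L" using assms(1) by (auto simp: L_def cube_def)
  qed
  have cardL: "card L = 2 ^ (n-1)" unfolding L_eq
    by (subst card_image) (auto simp: card_cube)
  have finL: "finite L" unfolding L_eq using finite_cube by simp
  define D where "D = cube n - H"
  have finD: "finite D" unfolding D_def using finite_cube by simp
  obtain xs where xs: "set xs = D" "distinct xs" using finite_distinct_list[OF finD] by blast
  have "card D = 2 ^ n - card H" unfolding D_def
    using card_Diff_subset[OF finH assms(2)] card_cube by simp
  moreover have "(2::nat) ^ n = 2 * 2 ^ (n-1)" using assms(1)
    by (metis Suc_diff_1 le_eq_less_or_eq less_one not_less power_Suc zero_less_iff_neq_zero)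
  moreover have "card H \<le> 2 ^ n" using card_mono[OF finite_cube assms(2)] card_cube by simp
  ultimately have cardD: "card D < card L" using assms(3) cardL by linarith
  define fs where "fs = map (\<lambda>x u. Aop u x + sqrt (real n) * u x) xs"
  have "length fs < card L" using cardD xs distinct_card[OF xs(2)] by (simp add: fs_def)
  moreover have "\<forall>\<phi>\<in>set fs. lin \<phi>" by (auto simp: fs_def lin_Aop)
  ultimately obtain u where u: "\<forall>x. x \<notin> L \<longrightarrow> u x = 0" "\<exists>v\<in>L. u v \<noteq> 0" "\<forall>\<phi>\<in>set fs. \<phi> u = 0"
    using homog[OF finL] by blast
  define w where "w x = Aop u x + sqrt (real n) * u x" for x
  have W1: "w x = 0" if "x \<notin> H" for x
  proof (cases "x \<in> cube n")
    case True
    then have "x \<in> set xs" using that xs by (auto simp: D_def)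
    then show ?thesis using u(3) by (auto simp: fs_def w_def)
  next
    case False
    then have "u x = 0" using u(1) by (auto simp: L_def)
    moreover have "u (flip k x) = 0" for k using u(1) False by (auto simp: L_def cube_def)
    ultimately show ?thesis by (simp add: w_def Aop_def)
  qed
  obtain x0 where x0: "w x0 \<noteq> 0"
  proof -
    obtain v where v: "v \<in> L" "u v \<noteq> 0" using u(2) by blast
    obtain m where m: "n = Suc m" using assms(1) by (cases n) auto
    have lv: "length v = Suc m" using v m by (auto simp: L_def cube_def)
    define x where "x = flip 0 v"
    have lx: "length x = Suc m" using lv by (simp add: x_def)
    have x0: "x ! 0" using v lv by (simp add: x_def nth_flip L_def)
    have "u x = 0" using u(1) x0 by (auto simp: L_def)
    moreover have "u (flip (Suc k) x) = 0" for k
      using u(1) x0 lx by (auto simp: L_def nth_flip)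
    moreover have "Aop u x = sg x 0 * u (flip 0 x) + (\<Sum>k<m. sg x (Suc k) * u (flip (Suc k) x))"
      unfolding Aop_def lx by (rule sum.lessThan_Suc_shift)
    ultimately have "w x = u v" by (simp add: w_def sg_def x_def)
    then show ?thesis using that v by metis
  qed
  have W3: "Aop w x = sqrt (real n) * w x" if "x \<in> cube n" for x
  proof -
    have "Aop w x = Aop (Aop u) x + sqrt (real n) * Aop u x"
      unfolding w_def Aop_def by (simp add: sum.distrib sum_distrib_left algebra_simps)
    also have "\<dots> = real n * u x + sqrt (real n) * Aop u x"
      using that by (simp add: A_sq cube_def)
    also have "\<dots> = sqrt (real n) * w x"
      by (simp add: w_def algebra_simps)
    finally show ?thesis .
  qed
  define p where "p x = C powr wt x * \<bar>w x\<bar>" for x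
  have x0H: "x0 \<in> H" using W1 x0 by blast
  define M where "M = Max (p ` H)"
  have "M \<in> p ` H" unfolding M_def using finH x0H by (intro Max_in) auto
  then obtain b where bH: "b \<in> H" and pb: "p b = M" by auto
  have pmax: "p x \<le> p b" if "x \<in> H" for x
    unfolding pb M_def using finH that by (intro Max_ge) auto
  have "p x0 > 0" using x0 assms(4) by (simp add: p_def)
  then have "p b > 0" using pmax[OF x0H] by simp
  then have wb: "w b \<noteq> 0" by (auto simp: p_def)
  have lb: "length b = n" using bH assms(2) by (auto simp: cube_def)
  define c where "c k = (if flip k b \<in> H then (if b!k then C else 1/C) else 0)" for k
  have bound: "\<bar>w (flip k b)\<bar> \<le> \<bar>w b\<bar> * c k" if "k < n" for k
  proof (cases "flip k b \<in> H")
    case False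
    then show ?thesis using W1 by (simp add: c_def)
  next
    case True
    have P: "C powr wt b > 0" using assms(4) by simp
    have le: "C powr wt (flip k b) * \<bar>w (flip k b)\<bar> \<le> C powr wt b * \<bar>w b\<bar>"
      using pmax[OF True] by (simp add: p_def)
    show ?thesis
    proof (cases "b!k")
      case bk: True
      have "C powr wt (flip k b) = C powr wt b / C"
        using wt_flip[of k b] that lb bk assms(4) by (simp add: powr_diff)
      then have "C powr wt b * (\<bar>w (flip k b)\<bar> / C) \<le> C powr wt b * \<bar>w b\<bar>" using le by simp
      then have "\<bar>w (flip k b)\<bar> / C \<le> \<bar>w b\<bar>" using P by (rule mult_left_le_imp_le)
      then show ?thesis using True bk assms(4) by (simp add: c_def pos_divide_le_eq mult.commute)
    next
      case bk: False
      have "C powr wt (flip k b) = C powr wt b * C"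
        using wt_flip[of k b] that lb bk assms(4) by (simp add: powr_add)
      then have "C powr wt b * (C * \<bar>w (flip k b)\<bar>) \<le> C powr wt b * \<bar>w b\<bar>" using le
        by (simp add: mult.assoc)
      then have "C * \<bar>w (flip k b)\<bar> \<le> \<bar>w b\<bar>" using P by (rule mult_left_le_imp_le)
      then show ?thesis using True bk assms(4) by (simp add: c_def pos_le_divide_eq mult.commute)
    qed
  qed
  have "sqrt (real n) * \<bar>w b\<bar> = \<bar>Aop w b\<bar>"
    using W3[of b] bH assms(2) by (auto simp: abs_mult)
  also have "\<dots> \<le> (\<Sum>k<n. \<bar>sg b k * w (flip k b)\<bar>)"
    unfolding Aop_def lb by (rule sum_abs)
  also have "\<dots> = (\<Sum>k<n. \<bar>w (flip k b)\<bar>)" by (simp add: abs_mult sg_abs)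
  also have "\<dots> \<le> (\<Sum>k<n. \<bar>w b\<bar> * c k)" by (rule sum_mono) (simp add: bound)
  also have "\<dots> = \<bar>w b\<bar> * (\<Sum>k<n. c k)" by (simp add: sum_distrib_left)
  finally have ineq: "sqrt (real n) \<le> (\<Sum>k<n. c k)" using wb by simp
  have "(\<Sum>k<n. c k) = (\<Sum>k<n. (if b!k \<and> flip k b \<in> H then C else 0) + (if \<not> b!k \<and> flip k b \<in> H then 1/C else 0))"
    by (rule sum.cong) (auto simp: c_def)
  also have "\<dots> = C * real (card {k. k < n \<and> b!k \<and> flip k b \<in> H}) + (1/C) * real (card {k. k < n \<and> \<not> b!k \<and> flip k b \<in> H})"
    by (simp add: sum.distrib sum.If_cases lessThan_def Int_def conj_commute)
  finally show ?thesis using ineq bH card_down[OF lb, of H] card_up[OF lb, of H] by auto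
qed

end
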